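(* Let $t_0,t_1$ be terms and $E$ a pure context with $k\notin\mathrm{fv}(t_1)$ and $x\notin\mathrm{fv}(E)$, such that $(\lambda x.E[\mathcal Sk.t_0])\,t_1$ and $E[\mathcal Sk.((\lambda x.t_0)\,t_1)]$ are closed. Then $(\lambda x.E[\mathcal Sk.t_0])\,t_1\approx^p_{\emptyset}E[\mathcal Sk.((\lambda x.t_0)\,t_1)]$.
   Context: Terms of $\lambda_S$: $t ::= x \mid \lambda x.t \mid t\,t \mid \mathcal{S}k.t \mid \langle t\rangle$ (shift binds $k$; $\langle\cdot\rangle$ reset), up to $\alpha$-conversion; $\mathrm{fv}(t)$ free variables. Values $v::=\lambda x.t$. Pure contexts $E ::= \Box \mid v\,E \mid E\,t$; evaluation contexts $F ::= \Box \mid v\,F \mid F\,t \mid \langle F\rangle$. Reduction: $F[(\lambda x.t)v]\to F[t\{v/x\}]$; $F[\langle E[\mathcal Sk.t]\rangle]\to F[\langle t\{\lambda x.\langle E[x]\rangle/k\}\rangle]$ ($x\notin\mathrm{fv}(E)$); $F[\langle v\rangle]\to F[v]$; $\to^*$ reflexive-transitive closure. Program: term $\langle t\rangle$ (ranged over by $p$). Closures: for $R$ a relation on closed terms, $\widetilde R$ is the smallest relation containing $R$, all $(x,x)$, closed under all term constructors, restricted to closed terms; $\widehat R$ is the smallest relation on closed evaluation contexts with $\Box\widehat R\Box$, $v_0F_0\widehat Rv_1F_1$ if $F_0\widehat RF_1,v_0\widetilde Rv_1$; $F_0t_0\widehat RF_1t_1$ if $F_0\widehat RF_1,t_0\widetilde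 Rt_1$; $\langle F_0\rangle\widehat R\langle F_1\rangle$ if $F_0\widehat RF_1$. Environmental bisimilarity for programs: an environment $\mathcal E$ is a relation on closed values; an environmental relation $\mathcal X$ is a set of environments and triples $(\mathcal E,t_0,t_1)$, $t_0,t_1$ closed, written $t_0\mathcal X_{\mathcal E}t_1$. $\mathcal X$ is an environmental bisimulation for programs if (1) if $t_0\mathcal X_{\mathcal E}t_1$ and $t_0,t_1$ are not both programs, then for all pure $E_0\widehat{\mathcal E}E_1$, $\langle E_0[t_0]\rangle\mathcal X_{\mathcal E}\langle E_1[t_1]\rangle$; (2) if $p_0\mathcal X_{\mathcal E}p_1$: (a) $p_0\to p_0'$ (program) implies $p_1\to^*p_1'$ (program) with $p_0'\mathcal X_{\mathcal E}p_1'$; (b) $p_0\to v_0$ implies $p_1\to^*v_1$ and $\{(v_0,v_1)\}\cup\mathcal E\in\mathcal X$; (c) symmetric conditions; (3) for $\mathcal E\in\mathcal X$, $(\lambda x.t_0)\mathcal E(\lambda x.t_1)$ and $v_0\widetilde{\mathcal E}v_1$ imply $t_0\{v_0/x\}\mathcal X_{\mathcal E}t_1\{v_1/x\}$. $\approx^p$ is the largest such relation; $t_0\approx^p_{\emptyset}t_1$ means $(\emptyset,t_0,t_1)\in\approx^p$ (defined on closed terms only). *)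

theory Defs
  imports Main
begin

section \<open>Syntax of lambda_S (named variables, raw terms)\<close>

type_synonym var = nat

datatype trm =
    Var var
  | Lam var trm
  | App trm trm
  | Shift var trm
  | Reset trm

fun fv :: "trm \<Rightarrow> var set" where
  "fv (Var x) = {x}"
| "fv (Lam x t) = fv t - {x}"
| "fv (App s t) = fv s \<union> fv t"
| "fv (Shift k t) = fv t - {k}"
| "fv (Reset t) = fv t"

definition closed :: "trm \<Rightarrow> bool" where
  "closed t \<longleftrightarrow> fv t = {}"

definition is_val :: "trm \<Rightarrow> bool" where
  "is_val t \<longleftrightarrow> (\<exists>x s. t = Lam x s)"

definition is_prog :: "trm \<Rightarrow> bool" where
  "is_prog t \<longleftrightarrow> (\<exists>s. t = Reset s)"

text \<open>It is only ever applied with a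
closed substituted term (all terms handled by the semantics are closed), in
which case no variable capture can occur and this is the usual
capture-avoiding substitution.\<close>
fun subst :: "var \<Rightarrow> trm \<Rightarrow> trm \<Rightarrow> trm" where
  "subst x v (Var y) = (if x = y then v else Var y)"
| "subst x v (Lam y t) = (if x = y then Lam y t else Lam y (subst x v t))"
| "subst x v (App s t) = App (subst x v s) (subst x v t)"
| "subst x v (Shift k t) = (if x = k then Shift k t else Shift k (subst x v t))"
| "subst x v (Reset t) = Reset (subst x v t)"

datatype ctx =
    Hole
  | CArg trm ctx
  | CFun ctx trm
  | CReset ctx

fun plug :: "ctx \<Rightarrow> trm \<Rightarrow> trm" where
  "plug Hole t = t"
| "plug (CArg v F) t = App v (plug F t)"
| "plug (CFun F s) t = App (plug F t) s"
| "plug (CReset F) t = Reset (plug F t)"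

fun fvc :: "ctx \<Rightarrow> var set" where
  "fvc Hole = {}"
| "fvc (CArg v F) = fv v \<union> fvc F"
| "fvc (CFun F s) = fvc F \<union> fv s"
| "fvc (CReset F) = fvc F"

fun pure :: "ctx \<Rightarrow> bool" where
  "pure Hole = True"
| "pure (CArg v F) = (is_val v \<and> pure F)"
| "pure (CFun F s) = pure F"
| "pure (CReset F) = False"

fun evctx :: "ctx \<Rightarrow> bool" where
  "evctx Hole = True"
| "evctx (CArg v F) = (is_val v \<and> evctx F)"
| "evctx (CFun F s) = evctx F"
| "evctx (CReset F) = evctx F"

inductive step :: "trm \<Rightarrow> trm \<Rightarrow> bool" where
  beta: "\<lbrakk>evctx F; is_val v\<rbrakk> \<Longrightarrow>
     step (plug F (App (Lam x t) v)) (plug F (subst x v t))"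
| shift: "\<lbrakk>evctx F; pure E; x \<notin> fvc E\<rbrakk> \<Longrightarrow>
     step (plug F (Reset (plug E (Shift k t))))
          (plug F (Reset (subst k (Lam x (Reset (plug E (Var x)))) t)))"
| reset: "\<lbrakk>evctx F; is_val v\<rbrakk> \<Longrightarrow> step (plug F (Reset v)) (plug F v)"

abbreviation steps :: "trm \<Rightarrow> trm \<Rightarrow> bool" where
  "steps \<equiv> step\<^sup>*\<^sup>*"

type_synonym env = "(trm \<times> trm) set"

inductive tilde_raw :: "env \<Rightarrow> trm \<Rightarrow> trm \<Rightarrow> bool" for R :: env where
  base: "(t0, t1) \<in> R \<Longrightarrow> tilde_raw R t0 t1"
| var: "tilde_raw R (Var x) (Var x)"
| lam: "tilde_raw R t0 t1 \<Longrightarrow> tilde_raw R (Lam x t0) (Lam x t1)"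
| app: "\<lbrakk>tilde_raw R s0 s1; tilde_raw R t0 t1\<rbrakk> \<Longrightarrow> tilde_raw R (App s0 t0) (App s1 t1)"
| shift: "tilde_raw R t0 t1 \<Longrightarrow> tilde_raw R (Shift k t0) (Shift k t1)"
| reset: "tilde_raw R t0 t1 \<Longrightarrow> tilde_raw R (Reset t0) (Reset t1)"

definition tilde :: "env \<Rightarrow> trm \<Rightarrow> trm \<Rightarrow> bool" where
  "tilde R t0 t1 \<longleftrightarrow> tilde_raw R t0 t1 \<and> closed t0 \<and> closed t1"

inductive hat :: "env \<Rightarrow> ctx \<Rightarrow> ctx \<Rightarrow> bool" for R :: env where
  hole: "hat R Hole Hole"
| arg: "\<lbrakk>hat R F0 F1; tilde R v0 v1; is_val v0; is_val v1\<rbrakk> \<Longrightarrow>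
          hat R (CArg v0 F0) (CArg v1 F1)"
| fun_: "\<lbrakk>hat R F0 F1; tilde R t0 t1\<rbrakk> \<Longrightarrow> hat R (CFun F0 t0) (CFun F1 t1)"
| reset: "hat R F0 F1 \<Longrightarrow> hat R (CReset F0) (CReset F1)"

text \<open>An environmental relation X is given by its set of environments Es and its
set of triples Ts; (E, t0, t1) \<in> Ts means t0 X_E t1.\<close>

definition env_ok :: "env \<Rightarrow> bool" where
  "env_ok E \<longleftrightarrow> (\<forall>(v0, v1) \<in> E. is_val v0 \<and> is_val v1 \<and> closed v0 \<and> closed v1)"

definition env_bisim :: "env set \<Rightarrow> (env \<times> trm \<times> trm) set \<Rightarrow> bool" where
  "env_bisim Es Ts \<longleftrightarrow>
     (\<forall>E \<in> Es. env_ok E) \<and>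
     (\<forall>(E, t0, t1) \<in> Ts. env_ok E \<and> closed t0 \<and> closed t1) \<and>
     \<comment> \<open>(1)\<close>
     (\<forall>(E, t0, t1) \<in> Ts. \<not> (is_prog t0 \<and> is_prog t1) \<longrightarrow>
        (\<forall>E0 E1. pure E0 \<and> pure E1 \<and> hat E E0 E1 \<longrightarrow>
           (E, Reset (plug E0 t0), Reset (plug E1 t1)) \<in> Ts)) \<and>
     \<comment> \<open>(2)\<close>
     (\<forall>(E, p0, p1) \<in> Ts. is_prog p0 \<and> is_prog p1 \<longrightarrow>
        (\<forall>p0'. step p0 p0' \<and> is_prog p0' \<longrightarrow>
           (\<exists>p1'. steps p1 p1' \<and> is_prog p1' \<and> (E, p0', p1') \<in> Ts)) \<and>
        (\<forall>v0. step p0 v0 \<and> is_val v0 \<longrightarrow>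
           (\<exists>v1. steps p1 v1 \<and> is_val v1 \<and> insert (v0, v1) E \<in> Es)) \<and>
        (\<forall>p1'. step p1 p1' \<and> is_prog p1' \<longrightarrow>
           (\<exists>p0'. steps p0 p0' \<and> is_prog p0' \<and> (E, p0', p1') \<in> Ts)) \<and>
        (\<forall>v1. step p1 v1 \<and> is_val v1 \<longrightarrow>
           (\<exists>v0. steps p0 v0 \<and> is_val v0 \<and> insert (v0, v1) E \<in> Es))) \<and>
     \<comment> \<open>(3); binders are compared up to alpha-conversion\<close>
     (\<forall>E \<in> Es. \<forall>x0 s0 x1 s1 v0 v1.
        (Lam x0 s0, Lam x1 s1) \<in> E \<and> tilde E v0 v1 \<and> is_val v0 \<and> is_val v1 \<longrightarrow>
          (E, subst x0 v0 s0, subst x1 v1 s1) \<in> Ts)"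

text \<open>Environmental bisimilarity for programs (the largest such relation):
t0 \<approx>p_E t1.\<close>
definition bisim_p :: "env \<Rightarrow> trm \<Rightarrow> trm \<Rightarrow> bool" where
  "bisim_p E t0 t1 \<longleftrightarrow> (\<exists>Es Ts. env_bisim Es Ts \<and> (E, t0, t1) \<in> Ts)"

end

theory Submission
  imports Defs
begin



lemma fv_plug[simp]: "fv (plug G t) = fvc G \<union> fv t"
  by (induction G) auto

lemma subst_nofv: "z \<notin> fv t \<Longrightarrow> subst z v t = t"
  by (induction t) auto

lemma subst_closed: "closed t \<Longrightarrow> subst z v t = t"
  by (simp add: closed_def subst_nofv)

lemma fv_subst: "fv (subst z v t) \<subseteq> (fv t - {z}) \<union> fv v"
  by (induction t) auto

lemma subst_plug: "fvc G = {} \<Longrightarrow> subst z v (plug G t) = plug G (subst z v t)"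
  by (induction G) (auto simp: subst_nofv)

lemma subst_comm: "x \<noteq> k \<Longrightarrow> closed a \<Longrightarrow> closed b \<Longrightarrow>
  subst x a (subst k b t) = subst k b (subst x a t)"
  by (induction t) (auto simp: subst_closed)

fun compc :: "ctx \<Rightarrow> ctx \<Rightarrow> ctx" where
  "compc Hole G = G"
| "compc (CArg v F) G = CArg v (compc F G)"
| "compc (CFun F s) G = CFun (compc F G) s"
| "compc (CReset F) G = CReset (compc F G)"

lemma plug_compc[simp]: "plug (compc F G) t = plug F (plug G t)"
  by (induction F) auto
lemma pure_compc[simp]: "pure F \<Longrightarrow> pure G \<Longrightarrow> pure (compc F G)"
  by (induction F) auto
lemma evctx_compc[simp]: "evctx F \<Longrightarrow> evctx G \<Longrightarrow> evctx (compc F G)"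
  by (induction F) auto
lemma fvc_compc[simp]: "fvc (compc F G) = fvc F \<union> fvc G"
  by (induction F) auto
lemma pure_evctx: "pure F \<Longrightarrow> evctx F"
  by (induction F) auto

inductive sos :: "trm \<Rightarrow> trm \<Rightarrow> bool" where
  s_beta: "is_val v \<Longrightarrow> sos (App (Lam y t) v) (subst y v t)"
| s_appL: "sos s s' \<Longrightarrow> sos (App s t) (App s' t)"
| s_appR: "is_val v \<Longrightarrow> sos t t' \<Longrightarrow> sos (App v t) (App v t')"
| s_reset: "sos t t' \<Longrightarrow> sos (Reset t) (Reset t')"
| s_resetv: "is_val v \<Longrightarrow> sos (Reset v) v"
| s_shift: "pure G \<Longrightarrow> z \<notin> fvc G \<Longrightarrow>
    sos (Reset (plug G (Shift j s))) (Reset (subst j (Lam z (Reset (plug G (Var z)))) s))"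

lemma sos_plug: "evctx F \<Longrightarrow> sos a b \<Longrightarrow> sos (plug F a) (plug F b)"
  by (induction F) (auto intro: sos.intros)

lemma step_sos: "step a b \<Longrightarrow> sos a b"
  by (induction rule: step.induct) (auto intro!: sos_plug intro: sos.intros)

lemma step_plug: "step a b \<Longrightarrow> evctx G \<Longrightarrow> step (plug G a) (plug G b)"
proof (induction rule: step.induct)
  case (beta F v x t)
  then show ?case using step.beta[of "compc G F" v x t] by simp
next
  case (shift F E x k t)
  then show ?case using step.shift[of "compc G F" E x k t] by simp
next
  case (reset F v)
  then show ?case using step.reset[of "compc G F" v] by simp
qed

lemma sos_step: "sos a b \<Longrightarrow> step a b"
proof (induction rule: sos.induct)
  case (s_beta v y t)
  then show ?case using step.beta[of Hole v y t] by simp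
next
  case (s_appL s s' t)
  then show ?case using step_plug[of s s' "CFun Hole t"] by simp
next
  case (s_appR v t t')
  then show ?case using step_plug[of t t' "CArg v Hole"] by simp
next
  case (s_reset t t')
  then show ?case using step_plug[of t t' "CReset Hole"] by simp
next
  case (s_resetv v)
  then show ?case using step.reset[of Hole v] by simp
next
  case (s_shift G z j s)
  then show ?case using step.shift[of Hole G z j s] by simp
qed

lemma step_eq: "step = sos"
  using step_sos sos_step by blast

lemma sos_fv: "sos a b \<Longrightarrow> fv b \<subseteq> fv a"
proof (induction rule: sos.induct)
  case (s_beta v y t)
  then show ?case using fv_subst[of y v t] by auto
next
  case (s_shift G z j s)
  then show ?case using fv_subst[of j "Lam z (Reset (plug G (Var z)))" s] by auto
qed auto

lemma sos_closed: "sos a b \<Longrightarrow> closed a \<Longrightarrow> closed b"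
  using sos_fv unfolding closed_def by blast

lemma sos_star_closed: "sos\<^sup>*\<^sup>* a b \<Longrightarrow> closed a \<Longrightarrow> closed b"
  by (induction rule: rtranclp_induct) (auto dest: sos_closed)

lemma sos_star_plug: "sos\<^sup>*\<^sup>* a b \<Longrightarrow> evctx F \<Longrightarrow> sos\<^sup>*\<^sup>* (plug F a) (plug F b)"
  by (induction rule: rtranclp_induct) (auto intro: rtranclp.rtrancl_into_rtrancl sos_plug)

lemma val_nostep: "is_val v \<Longrightarrow> sos v q \<Longrightarrow> False"
  by (auto simp: is_val_def elim: sos.cases)

lemma pure_plug_nonval: "pure G \<Longrightarrow> is_val (plug G (Shift j s)) \<Longrightarrow> False"
  by (cases G) (auto simp: is_val_def)

lemma pure_plug_app_nonval: "pure G \<Longrightarrow> is_val (plug G (App a b)) \<Longrightarrow> False"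
  by (cases G) (auto simp: is_val_def)

lemma plug_shift_nonlam[simp]: "pure G \<Longrightarrow> plug G (Shift j s) \<noteq> Lam y t"
  by (cases G) auto
lemma plug_app_nonlam[simp]: "pure G \<Longrightarrow> plug G (App a b) \<noteq> Lam y t"
  by (cases G) auto

lemma nostep_shift: "pure G \<Longrightarrow> sos (plug G (Shift j s)) q \<Longrightarrow> False"
proof (induction G arbitrary: q)
  case Hole then show ?case by (auto elim: sos.cases)
next
  case (CArg v F)
  from CArg.prems have "sos (App v (plug F (Shift j s))) q" "is_val v" "pure F" by auto
  then show ?case
    by (cases rule: sos.cases) (auto dest: CArg.IH val_nostep pure_plug_nonval)
next
  case (CFun F s0)
  from CFun.prems have "sos (App (plug F (Shift j s)) s0) q" "pure F" by auto
  then show ?case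
    by (cases rule: sos.cases) (auto dest: CFun.IH val_nostep pure_plug_nonval)
next
  case (CReset F) then show ?case by simp
qed

lemma shift_uniq: "pure G1 \<Longrightarrow> pure G2 \<Longrightarrow> plug G1 (Shift j s) = plug G2 (Shift j' s') \<Longrightarrow>
  G1 = G2 \<and> j = j' \<and> s = s'"
proof (induction G1 arbitrary: G2)
  case Hole then show ?case by (cases G2) auto
next
  case (CArg v F) then show ?case
    by (cases G2) (auto dest: pure_plug_nonval)
next
  case (CFun F s0) then show ?case
    by (cases G2) (auto dest: pure_plug_nonval)
next
  case (CReset F) then show ?case by simp
qed

lemma app_shift_decomp: "pure G \<Longrightarrow> pure G2 \<Longrightarrow> is_val v \<Longrightarrow>
  plug G (App v u) = plug G2 (Shift j s) \<Longrightarrow>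
  \<exists>G3. pure G3 \<and> G2 = compc G (CArg v G3) \<and> u = plug G3 (Shift j s)"
proof (induction G arbitrary: G2)
  case Hole then show ?case
    by (cases G2) (auto dest: pure_plug_nonval)
next
  case (CArg w F)
  show ?case
  proof (cases G2)
    case (CArg w' F')
    with CArg.prems CArg.IH[of F'] show ?thesis by auto
  next
    case (CFun F' s')
    with CArg.prems show ?thesis by (auto dest: pure_plug_nonval)
  qed (use CArg.prems in auto)
next
  case (CFun F s0)
  show ?case
  proof (cases G2)
    case (CFun F' s')
    with CFun.prems CFun.IH[of F'] show ?thesis by auto
  next
    case (CArg w' F')
    with CFun.prems show ?thesis by (auto dest: pure_plug_app_nonval)
  qed (use CFun.prems in auto)
next
  case (CReset F) then show ?case by simp
qed

lemma app_step_inv: "pure G \<Longrightarrow> is_val v \<Longrightarrow> sos (plug G (App v u)) r \<Longrightarrow>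
  (is_val u \<and> (\<exists>y t. v = Lam y t \<and> r = plug G (subst y u t))) \<or>
  (\<exists>u2. sos u u2 \<and> r = plug G (App v u2))"
proof (induction G arbitrary: r)
  case Hole then show ?case by (auto elim: sos.cases dest: val_nostep)
next
  case (CArg w F)
  from CArg.prems have "sos (App w (plug F (App v u))) r" "is_val w" "pure F" "is_val v" by auto
  then show ?case
    by (cases rule: sos.cases) (auto dest: CArg.IH val_nostep pure_plug_app_nonval)
next
  case (CFun F s0)
  from CFun.prems have "sos (App (plug F (App v u)) s0) r" "pure F" "is_val v" by auto
  then show ?case
    by (cases rule: sos.cases) (auto dest: CFun.IH val_nostep pure_plug_app_nonval)
next
  case (CReset F) then show ?case by simp
qed




lemma size_plug: "size t \<le> size (plug G t)"
  by (induction G) auto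

locale L =
  fixes x k :: var and t0 :: trm and E :: ctx
  assumes pE: "pure E" and xk: "x \<noteq> k" and cE: "fvc E = {}" and ft0: "fv t0 \<subseteq> {x,k}"
begin

definition B :: trm where "B = plug E (Shift k t0)"
definition cont :: "ctx \<Rightarrow> var \<Rightarrow> trm" where
  "cont G y = Lam y (Reset (plug G (plug E (Var y))))"
definition Tr :: "ctx \<Rightarrow> var \<Rightarrow> trm" where
  "Tr G y = Lam x (subst k (cont G y) t0)"

lemma closed_LamB: "closed (Lam x B)"
  using cE ft0 by (auto simp: closed_def B_def)

lemma closed_cont: "fvc G = {} \<Longrightarrow> closed (cont G y)"
  using cE by (auto simp: closed_def cont_def)

lemma closed_Tr: "fvc G = {} \<Longrightarrow> closed (Tr G y)"
proof -
  assume "fvc G = {}"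
  hence "fv (cont G y) = {}" using closed_cont closed_def by blast
  thus ?thesis using fv_subst[of k "cont G y" t0] ft0 by (auto simp: closed_def Tr_def)
qed

lemma val_Tr[simp]: "is_val (Tr G y)"
  by (simp add: Tr_def is_val_def)
lemma val_LamB[simp]: "is_val (Lam x B)"
  by (simp add: is_val_def)

lemma subst_B: "subst x w B = plug E (Shift k (subst x w t0))"
  using xk cE by (simp add: B_def subst_plug)

lemma closed_prog2: "fvc G = {} \<Longrightarrow> closed w \<Longrightarrow>
   closed (Reset (plug G (plug E (Shift k (subst x w t0)))))"
  using fv_subst[of x w t0] ft0 cE by (auto simp: closed_def)

inductive rel :: "trm \<Rightarrow> trm \<Rightarrow> bool" where
  rVar: "rel (Var a) (Var a)"
| rLam: "rel s s' \<Longrightarrow> rel (Lam a s) (Lam a s')"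
| rApp: "rel s s' \<Longrightarrow> rel t t' \<Longrightarrow> rel (App s t) (App s' t')"
| rShift: "rel s s' \<Longrightarrow> rel (Shift a s) (Shift a s')"
| rReset: "rel s s' \<Longrightarrow> rel (Reset s) (Reset s')"
| rProg: "pure G \<Longrightarrow> fvc G = {} \<Longrightarrow> rel u u' \<Longrightarrow>
    rel (Reset (plug G (App (Lam x B) u))) (Reset (App (Tr G y) u'))"
| rProg2: "pure G \<Longrightarrow> fvc G = {} \<Longrightarrow> rel w w' \<Longrightarrow> is_val w \<Longrightarrow> is_val w' \<Longrightarrow>
    closed w \<Longrightarrow> closed w' \<Longrightarrow>
    rel (Reset (plug G (plug E (Shift k (subst x w t0))))) (Reset (App (Tr G y) w'))"
| rAlpha: "pure G \<Longrightarrow> fvc G = {} \<Longrightarrow>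
    rel (Lam z (Reset (plug G (Var z)))) (Lam y (Reset (plug G (Var y))))"

lemma rel_refl: "rel t t"
  by (induction t) (auto intro: rel.intros)

lemma rel_subst: "rel s s' \<Longrightarrow> rel v v' \<Longrightarrow> closed v \<Longrightarrow> closed v' \<Longrightarrow>
  rel (subst z v s) (subst z v' s')"
proof (induction rule: rel.induct)
  case (rProg G u u' y)
  have e1: "subst z v (Reset (plug G (App (Lam x B) u))) = Reset (plug G (App (Lam x B) (subst z v u)))"
    using rProg closed_LamB by (simp only: subst.simps(3,5) subst_plug subst_closed)
  have e2: "subst z v' (Reset (App (Tr G y) u')) = Reset (App (Tr G y) (subst z v' u'))"
    using rProg closed_Tr[of G y] by (simp only: subst.simps(3,5) subst_closed)
  show ?case unfolding e1 e2 using rProg by (auto intro!: rel.rProg)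
next
  case (rProg2 G w w' y)
  have c1: "closed (Reset (plug G (plug E (Shift k (subst x w t0)))))"
    using rProg2 closed_prog2 by blast
  have c2: "closed (Reset (App (Tr G y) w'))"
    using rProg2 closed_Tr[of G y] by (auto simp: closed_def)
  show ?case using rel.rProg2[OF rProg2(1-7), of y]
    by (simp only: subst_closed[OF c1] subst_closed[OF c2])
next
  case (rAlpha G z y)
  have c1: "closed (Lam z (Reset (plug G (Var z))))" "closed (Lam y (Reset (plug G (Var y))))"
    using rAlpha by (auto simp: closed_def)
  show ?case using rel.rAlpha[OF rAlpha(1,2), of z y]
    by (simp only: subst_closed[OF c1(1)] subst_closed[OF c1(2)])
qed (auto intro: rel.intros)

lemma rel_val: "rel a b \<Longrightarrow> is_val a \<longleftrightarrow> is_val b"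
  by (cases rule: rel.cases) (auto simp: is_val_def)

lemma rel_prog: "rel a b \<Longrightarrow> is_prog a \<longleftrightarrow> is_prog b"
  by (cases rule: rel.cases) (auto simp: is_prog_def)

lemma rel_AppE: "rel (App a b) t' \<Longrightarrow> \<exists>a' b'. t' = App a' b' \<and> rel a a' \<and> rel b b'"
  by (cases rule: rel.cases) auto
lemma rel_AppE': "rel t (App a' b') \<Longrightarrow> \<exists>a b. t = App a b \<and> rel a a' \<and> rel b b'"
  by (cases rule: rel.cases) auto
lemma rel_ShiftE: "rel (Shift j a) t' \<Longrightarrow> \<exists>a'. t' = Shift j a' \<and> rel a a'"
  by (cases rule: rel.cases) auto
lemma rel_ShiftE': "rel t (Shift j a') \<Longrightarrow> \<exists>a. t = Shift j a \<and> rel a a'"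
  by (cases rule: rel.cases) auto
lemma rel_LamE: "rel (Lam y s) t' \<Longrightarrow> (\<exists>s'. t' = Lam y s' \<and> rel s s') \<or>
   (\<exists>G z. pure G \<and> fvc G = {} \<and> s = Reset (plug G (Var y)) \<and> t' = Lam z (Reset (plug G (Var z))))"
  by (cases rule: rel.cases) auto
lemma rel_LamE': "rel t (Lam y s') \<Longrightarrow> (\<exists>s. t = Lam y s \<and> rel s s') \<or>
   (\<exists>G z. pure G \<and> fvc G = {} \<and> s' = Reset (plug G (Var y)) \<and> t = Lam z (Reset (plug G (Var z))))"
  by (cases rule: rel.cases) auto
lemma rel_ResetE: "rel (Reset s) t' \<Longrightarrow> (\<exists>s'. t' = Reset s' \<and> rel s s') \<or>
  (\<exists>G u u' y. pure G \<and> fvc G = {} \<and> rel u u' \<and> s = plug G (App (Lam x B) u) \<and> t' = Reset (App (Tr G y) u')) \<or>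
  (\<exists>G w w' y. pure G \<and> fvc G = {} \<and> rel w w' \<and> is_val w \<and> is_val w' \<and> closed w \<and> closed w' \<and>
     s = plug G (plug E (Shift k (subst x w t0))) \<and> t' = Reset (App (Tr G y) w'))"
  apply (erule rel.cases)
  apply (simp_all)
  apply (rule disjI2, rule disjI1, blast)
  apply (rule disjI2, rule disjI2, blast)
  done
lemma rel_ResetE': "rel t (Reset s') \<Longrightarrow> (\<exists>s. t = Reset s \<and> rel s s') \<or>
  (\<exists>G u u' y. pure G \<and> fvc G = {} \<and> rel u u' \<and> t = Reset (plug G (App (Lam x B) u)) \<and> s' = App (Tr G y) u') \<or>
  (\<exists>G w w' y. pure G \<and> fvc G = {} \<and> rel w w' \<and> is_val w \<and> is_val w' \<and> closed w \<and> closed w' \<and>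
     t = Reset (plug G (plug E (Shift k (subst x w t0)))) \<and> s' = App (Tr G y) w')"
  apply (erule rel.cases)
  apply (simp_all)
  apply (rule disjI2, rule disjI1, blast)
  apply (rule disjI2, rule disjI2, blast)
  done

fun ctxr :: "ctx \<Rightarrow> ctx \<Rightarrow> bool" where
  "ctxr Hole Hole = True"
| "ctxr (CArg v F) (CArg v' F') = (rel v v' \<and> ctxr F F')"
| "ctxr (CFun F s) (CFun F' s') = (ctxr F F' \<and> rel s s')"
| "ctxr (CReset F) (CReset F') = ctxr F F'"
| "ctxr _ _ = False"

lemma ctxr_plug: "ctxr G G' \<Longrightarrow> rel a a' \<Longrightarrow> rel (plug G a) (plug G' a')"
  by (induction G G' rule: ctxr.induct) (auto intro: rel.intros)

lemma ctxr_refl: "ctxr G G"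
  by (induction G) (auto simp: rel_refl)

lemma rel_decomp: "pure G \<Longrightarrow> rel (plug G X) t' \<Longrightarrow>
   \<exists>G' X'. t' = plug G' X' \<and> pure G' \<and> ctxr G G' \<and> rel X X'"
proof (induction G arbitrary: t')
  case Hole then show ?case by (intro exI[of _ Hole]) auto
next
  case (CArg v F)
  then obtain a' b' where "t' = App a' b'" "rel v a'" "rel (plug F X) b'"
    using rel_AppE by fastforce
  with CArg show ?case using rel_val[of v a'] by (fastforce intro: exI[of _ "CArg a' _"])
next
  case (CFun F s)
  then obtain a' b' where "t' = App a' b'" "rel (plug F X) a'" "rel s b'"
    using rel_AppE by fastforce
  with CFun show ?case by (fastforce intro: exI[of _ "CFun _ b'"])
qed simp

lemma rel_decomp': "pure G' \<Longrightarrow> rel t (plug G' X') \<Longrightarrow>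
   \<exists>G X. t = plug G X \<and> pure G \<and> ctxr G G' \<and> rel X X'"
proof (induction G' arbitrary: t)
  case Hole then show ?case by (intro exI[of _ Hole]) auto
next
  case (CArg v F)
  then obtain a b where "t = App a b" "rel a v" "rel b (plug F X')"
    using rel_AppE' by fastforce
  with CArg show ?case using rel_val[of a v] by (fastforce intro: exI[of _ "CArg a _"])
next
  case (CFun F s)
  then obtain a b where "t = App a b" "rel a (plug F X')" "rel b s"
    using rel_AppE' by fastforce
  with CFun show ?case by (fastforce intro: exI[of _ "CFun _ b"])
qed simp

end



context L begin

lemma closed_App[simp]: "closed (App a b) \<longleftrightarrow> closed a \<and> closed b"
  by (auto simp: closed_def)
lemma closed_Reset[simp]: "closed (Reset a) \<longleftrightarrow> closed a"
  by (auto simp: closed_def)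
lemma closed_plug[simp]: "closed (plug G a) \<longleftrightarrow> fvc G = {} \<and> closed a"
  by (auto simp: closed_def)

lemma cont_eq: "cont G y = Lam y (Reset (plug (compc G E) (Var y)))"
  by (simp add: cont_def)

lemma fwd: "sos p q \<Longrightarrow> rel p p' \<Longrightarrow> closed p \<Longrightarrow> closed p' \<Longrightarrow> \<exists>q'. sos\<^sup>*\<^sup>* p' q' \<and> rel q q'"
proof (induction p arbitrary: p' q rule: measure_induct_rule[of size])
  case (less p)
  from less.prems(1) show ?case
  proof (cases rule: sos.cases)
    case (s_beta v y t)
    from less.prems(2) s_beta obtain a' b' where ab: "p' = App a' b'" "rel (Lam y t) a'" "rel v b'"
      using rel_AppE by blast
    have cv: "closed v" "closed b'" using less.prems s_beta ab by auto
    have vb: "is_val b'" using rel_val ab s_beta by blast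
    from rel_LamE[OF ab(2)] show ?thesis
    proof
      assume "\<exists>s'. a' = Lam y s' \<and> rel t s'"
      then obtain t' where "a' = Lam y t'" "rel t t'" by blast
      then show ?thesis using ab s_beta vb cv
        by (auto intro!: exI[of _ "subst y b' t'"] sos.s_beta rel_subst)
    next
      assume "\<exists>G z. pure G \<and> fvc G = {} \<and> t = Reset (plug G (Var y)) \<and> a' = Lam z (Reset (plug G (Var z)))"
      then obtain G z where G: "pure G" "fvc G = {}" "t = Reset (plug G (Var y))" "a' = Lam z (Reset (plug G (Var z)))"
        by blast
      have "sos p' (Reset (plug G b'))"
        using sos.s_beta[OF vb, of z "Reset (plug G (Var z))"] G ab by (simp add: subst_plug)
      moreover have "rel q (Reset (plug G b'))"
        using s_beta G ab by (simp add: subst_plug rel.rReset ctxr_plug ctxr_refl)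
      ultimately show ?thesis by blast
    qed
  next
    case (s_appL s s' t)
    from less.prems(2) s_appL obtain a' b' where ab: "p' = App a' b'" "rel s a'" "rel t b'"
      using rel_AppE by blast
    from less.IH[of s s' a'] s_appL ab less.prems obtain a'' where "sos\<^sup>*\<^sup>* a' a''" "rel s' a''"
      by auto
    then show ?thesis using sos_star_plug[of a' a'' "CFun Hole b'"] ab s_appL
      by (auto intro!: rel.rApp)
  next
    case (s_appR v t t')
    from less.prems(2) s_appR obtain a' b' where ab: "p' = App a' b'" "rel v a'" "rel t b'"
      using rel_AppE by blast
    have va: "is_val a'" using rel_val ab s_appR by blast
    from less.IH[of t t' b'] s_appR ab less.prems obtain b'' where "sos\<^sup>*\<^sup>* b' b''" "rel t' b''"
      by auto
    then show ?thesis using sos_star_plug[of b' b'' "CArg a' Hole"] ab s_appR va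
      by (auto intro!: rel.rApp)
  next
    case (s_reset t t')
    from rel_ResetE[of t p'] less.prems(2) s_reset
    consider (c) s' where "p' = Reset s'" "rel t s'"
      | (p) G u u' y where "pure G" "fvc G = {}" "rel u u'" "t = plug G (App (Lam x B) u)"
          "p' = Reset (App (Tr G y) u')"
      | (p2) G w w' y where "pure G" "fvc G = {}" "rel w w'" "is_val w" "is_val w'" "closed w" "closed w'"
          "t = plug G (plug E (Shift k (subst x w t0)))" "p' = Reset (App (Tr G y) w')"
      by blast
    then show ?thesis
    proof cases
      case c
      from less.IH[of t t' s'] s_reset c less.prems obtain s'' where "sos\<^sup>*\<^sup>* s' s''" "rel t' s''"
        by auto
      then show ?thesis using sos_star_plug[of s' s'' "CReset Hole"] c s_reset
        by (auto intro!: rel.rReset)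
    next
      case p
      have cu: "closed u" "closed u'" using p less.prems s_reset by auto
      from app_step_inv[of G "Lam x B" u t'] p s_reset
      have "(is_val u \<and> t' = plug G (subst x u B)) \<or> (\<exists>u2. sos u u2 \<and> t' = plug G (App (Lam x B) u2))"
        by auto
      then show ?thesis
      proof
        assume h: "is_val u \<and> t' = plug G (subst x u B)"
        have "rel q p'" using p h s_reset cu rel_val[of u u']
          by (auto simp: subst_B intro!: rel.rProg2)
        then show ?thesis by blast
      next
        assume "\<exists>u2. sos u u2 \<and> t' = plug G (App (Lam x B) u2)"
        then obtain u2 where u2: "sos u u2" "t' = plug G (App (Lam x B) u2)" by blast
        have "size u < size p"
          using p s_reset size_plug[of "App (Lam x B) u" G] by simp
        from less.IH[OF this u2(1) p(3) cu] obtain u3 where u3: "sos\<^sup>*\<^sup>* u' u3" "rel u2 u3" by blast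
        have "sos\<^sup>*\<^sup>* p' (Reset (App (Tr G y) u3))"
          using sos_star_plug[OF u3(1), of "CReset (CArg (Tr G y) Hole)"] p by simp
        moreover have "rel q (Reset (App (Tr G y) u3))"
          using s_reset u2 u3 p by (auto intro!: rel.rProg)
        ultimately show ?thesis by blast
      qed
    next
      case p2
      then have False using s_reset nostep_shift[of "compc G E"] pE by auto
      then show ?thesis ..
    qed
  next
    case s_resetv
    from rel_ResetE[of q p'] less.prems(2) s_resetv
    consider (c) s' where "p' = Reset s'" "rel q s'"
      | (p) G u where "pure G" "q = plug G (App (Lam x B) u)"
      | (p2) G w where "pure G" "q = plug G (plug E (Shift k (subst x w t0)))"
      by blast
    then show ?thesis
    proof cases
      case c
      then have "is_val s'" using rel_val s_resetv by blast
      then show ?thesis using c s_resetv by (auto intro: sos.s_resetv)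
    next
      case p then show ?thesis using s_resetv pure_plug_app_nonval by blast
    next
      case p2 then show ?thesis using s_resetv pure_plug_nonval[of "compc G E"] pE by auto
    qed
  next
    case (s_shift G z j s)
    have cG: "fvc G = {}" using less.prems s_shift by auto
    from rel_ResetE[of "plug G (Shift j s)" p'] less.prems(2) s_shift
    consider (c) s' where "p' = Reset s'" "rel (plug G (Shift j s)) s'"
      | (p) G0 u u' y where "pure G0" "fvc G0 = {}" "rel u u'" "plug G (Shift j s) = plug G0 (App (Lam x B) u)"
          "p' = Reset (App (Tr G0 y) u')"
      | (p2) G0 w w' y where "pure G0" "fvc G0 = {}" "rel w w'" "is_val w" "is_val w'" "closed w" "closed w'"
          "plug G (Shift j s) = plug G0 (plug E (Shift k (subst x w t0)))" "p' = Reset (App (Tr G0 y) w')"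
      by blast
    then show ?thesis
    proof cases
      case c
      from rel_decomp[OF s_shift(3) c(2)] obtain G' X' where
        G': "s' = plug G' X'" "pure G'" "ctxr G G'" "rel (Shift j s) X'" by blast
      from rel_ShiftE[OF G'(4)] obtain s2 where s2: "X' = Shift j s2" "rel s s2" by blast
      have cG': "fvc G' = {}" using less.prems(4) c G' by auto
      have "sos p' (Reset (subst j (Lam z (Reset (plug G' (Var z)))) s2))"
        using sos.s_shift[OF G'(2), of z j s2] cG' c G' s2 by simp
      moreover have "rel q (Reset (subst j (Lam z (Reset (plug G' (Var z)))) s2))"
        using s_shift s2 cG cG' G'
        by (auto intro!: rel.rReset rel_subst rel.rLam ctxr_plug rel.rVar simp: closed_def)
      ultimately show ?thesis by blast
    next
      case p
      from app_shift_decomp[of G0 G "Lam x B" u j s] p s_shift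
      obtain G3 where G3: "pure G3" "G = compc G0 (CArg (Lam x B) G3)" "u = plug G3 (Shift j s)"
        by auto
      from rel_decomp[OF G3(1)] p(3) G3(3) obtain G3' X' where
        G3': "u' = plug G3' X'" "pure G3'" "ctxr G3 G3'" "rel (Shift j s) X'" by blast
      from rel_ShiftE[OF G3'(4)] obtain s2 where s2: "X' = Shift j s2" "rel s s2" by blast
      have cG3': "fvc G3' = {}" using less.prems(4) p G3' by auto
      have cG3: "fvc G3 = {}" using cG G3 by auto
      let ?dR = "Lam z (Reset (plug (CArg (Tr G0 y) G3') (Var z)))"
      have "sos p' (Reset (subst j ?dR s2))"
        using sos.s_shift[of "CArg (Tr G0 y) G3'" z j s2] cG3' p G3' s2 closed_Tr[of G0 y]
        by (simp add: closed_def)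
      moreover have "rel q (Reset (subst j ?dR s2))"
      proof -
        have "rel (Lam z (Reset (plug G (Var z)))) ?dR"
          using G3 p G3' by (auto intro!: rel.rLam rel.rProg ctxr_plug rel.rVar)
        moreover have "closed ?dR" using cG3' closed_Tr[of G0 y] p by (auto simp: closed_def)
        moreover have "closed (Lam z (Reset (plug G (Var z))))" using cG by (auto simp: closed_def)
        ultimately show ?thesis using s_shift s2 by (auto intro!: rel.rReset rel_subst)
      qed
      ultimately show ?thesis by blast
    next
      case p2
      from shift_uniq[of G "compc G0 E" j s k "subst x w t0"] p2 s_shift pE
      have eq: "G = compc G0 E" "j = k" "s = subst x w t0" by auto
      let ?c = "cont G0 y"
      have cc: "closed ?c" using closed_cont p2 by blast
      have "sos p' (Reset (subst x w' (subst k ?c t0)))"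
        using p2 by (auto simp: Tr_def intro!: sos.s_reset sos.s_beta)
      moreover have "rel q (Reset (subst x w' (subst k ?c t0)))"
      proof -
        have e: "subst x w' (subst k ?c t0) = subst k ?c (subst x w' t0)"
          using subst_comm[OF xk] p2 cc by blast
        have r1: "rel (subst x w t0) (subst x w' t0)" using rel_subst[OF rel_refl] p2 by blast
        have r2: "rel (Lam z (Reset (plug G (Var z)))) ?c"
          unfolding cont_eq eq using rel.rAlpha[of "compc G0 E" z y] p2 pE cE by auto
        have c3: "closed (Lam z (Reset (plug G (Var z))))" using cG by (auto simp: closed_def)
        show ?thesis unfolding e using s_shift eq r1 r2 c3 cc by (auto intro!: rel.rReset rel_subst)
      qed
      ultimately show ?thesis by blast
    qed
  qed
qed


lemma bwd_beta_aux:
  assumes "pure G" "fvc G = {}" "rel u u'" "is_val u" "closed u" "closed u'"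
  shows "rel (Reset (subst k (Lam y (Reset (plug (compc G E) (Var y)))) (subst x u t0)))
             (Reset (subst x u' (subst k (cont G y) t0)))"
proof -
  let ?c = "cont G y"
  have cc: "closed ?c" using closed_cont assms by blast
  have e: "subst x u' (subst k ?c t0) = subst k ?c (subst x u' t0)"
    using subst_comm[OF xk] assms cc by blast
  have r1: "rel (subst x u t0) (subst x u' t0)" using rel_subst[OF rel_refl] assms by blast
  show ?thesis unfolding e using r1 cc rel_refl[of ?c]
    by (auto intro!: rel.rReset rel_subst simp: cont_eq)
qed

lemma bwd: "sos p' q' \<Longrightarrow> rel p p' \<Longrightarrow> closed p \<Longrightarrow> closed p' \<Longrightarrow> \<exists>q. sos\<^sup>*\<^sup>* p q \<and> rel q q'"
proof (induction p' arbitrary: p q' rule: measure_induct_rule[of size])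
  case (less p')
  from less.prems(1) show ?case
  proof (cases rule: sos.cases)
    case (s_beta v' y t')
    from less.prems(2) s_beta obtain a b where ab: "p = App a b" "rel a (Lam y t')" "rel b v'"
      using rel_AppE' by blast
    have cv: "closed v'" "closed b" using less.prems s_beta ab by auto
    have vb: "is_val b" using rel_val ab s_beta by blast
    from rel_LamE'[OF ab(2)] show ?thesis
    proof
      assume "\<exists>s. a = Lam y s \<and> rel s t'"
      then obtain t where "a = Lam y t" "rel t t'" by blast
      then show ?thesis using ab s_beta vb cv
        by (auto intro!: exI[of _ "subst y b t"] sos.s_beta rel_subst)
    next
      assume "\<exists>G z. pure G \<and> fvc G = {} \<and> t' = Reset (plug G (Var y)) \<and> a = Lam z (Reset (plug G (Var z)))"
      then obtain G z where G: "pure G" "fvc G = {}" "t' = Reset (plug G (Var y))" "a = Lam z (Reset (plug G (Var z)))"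
        by blast
      have "sos p (Reset (plug G b))"
        using sos.s_beta[OF vb, of z "Reset (plug G (Var z))"] G ab by (simp add: subst_plug)
      moreover have "rel (Reset (plug G b)) q'"
        using s_beta G ab by (simp add: subst_plug rel.rReset ctxr_plug ctxr_refl)
      ultimately show ?thesis by blast
    qed
  next
    case (s_appL s s' t)
    from less.prems(2) s_appL obtain a b where ab: "p = App a b" "rel a s" "rel b t"
      using rel_AppE' by blast
    from less.IH[of s s' a] s_appL ab less.prems obtain a'' where "sos\<^sup>*\<^sup>* a a''" "rel a'' s'"
      by auto
    then show ?thesis using sos_star_plug[of a a'' "CFun Hole b"] ab s_appL
      by (auto intro!: rel.rApp)
  next
    case (s_appR v t t')
    from less.prems(2) s_appR obtain a b where ab: "p = App a b" "rel a v" "rel b t"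
      using rel_AppE' by blast
    have va: "is_val a" using rel_val ab s_appR by blast
    from less.IH[of t t' b] s_appR ab less.prems obtain b'' where "sos\<^sup>*\<^sup>* b b''" "rel b'' t'"
      by auto
    then show ?thesis using sos_star_plug[of b b'' "CArg a Hole"] ab s_appR va
      by (auto intro!: rel.rApp)
  next
    case (s_reset t t')
    from rel_ResetE'[of p t] less.prems(2) s_reset
    consider (c) s where "p = Reset s" "rel s t"
      | (p) G u u' y where "pure G" "fvc G = {}" "rel u u'" "p = Reset (plug G (App (Lam x B) u))"
          "t = App (Tr G y) u'"
      | (p2) G w w' y where "pure G" "fvc G = {}" "rel w w'" "is_val w" "is_val w'" "closed w" "closed w'"
          "p = Reset (plug G (plug E (Shift k (subst x w t0))))" "t = App (Tr G y) w'"
      by blast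
    then show ?thesis
    proof cases
      case c
      from less.IH[of t t' s] s_reset c less.prems obtain s'' where "sos\<^sup>*\<^sup>* s s''" "rel s'' t'"
        by auto
      then show ?thesis using sos_star_plug[of s s'' "CReset Hole"] c s_reset
        by (auto intro!: rel.rReset)
    next
      case p
      have cu: "closed u" "closed u'" using p less.prems s_reset by auto
      from app_step_inv[of Hole "Tr G y" u' t'] p s_reset
      have "(is_val u' \<and> t' = subst x u' (subst k (cont G y) t0)) \<or> (\<exists>u2. sos u' u2 \<and> t' = App (Tr G y) u2)"
        using val_Tr[of G y] by (auto simp: Tr_def)
      then show ?thesis
      proof
        assume h: "is_val u' \<and> t' = subst x u' (subst k (cont G y) t0)"
        have vu: "is_val u" using h p rel_val by blast
        have "sos p (Reset (plug G (subst x u B)))"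
          using p vu by (auto intro!: sos.s_reset sos_plug sos.s_beta pure_evctx)
        moreover have "sos (Reset (plug G (subst x u B)))
              (Reset (subst k (Lam y (Reset (plug (compc G E) (Var y)))) (subst x u t0)))"
          using sos.s_shift[of "compc G E" y k "subst x u t0"] p pE cE by (simp add: subst_B)
        moreover have "rel (Reset (subst k (Lam y (Reset (plug (compc G E) (Var y)))) (subst x u t0))) q'"
          using bwd_beta_aux[of G u u' y] p vu cu h s_reset by auto
        ultimately show ?thesis by (meson converse_rtranclp_into_rtranclp r_into_rtranclp)
      next
        assume "\<exists>u2. sos u' u2 \<and> t' = App (Tr G y) u2"
        then obtain u2 where u2: "sos u' u2" "t' = App (Tr G y) u2" by blast
        have "size u' < size p'"
          using p s_reset by simp
        from less.IH[OF this u2(1) p(3) cu] obtain u3 where u3: "sos\<^sup>*\<^sup>* u u3" "rel u3 u2" by blast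
        have "sos\<^sup>*\<^sup>* p (Reset (plug G (App (Lam x B) u3)))"
          using sos_star_plug[OF u3(1), of "CReset (compc G (CArg (Lam x B) Hole))"] p pure_evctx by simp
        moreover have "rel (Reset (plug G (App (Lam x B) u3))) q'"
          using s_reset u2 u3 p by (auto intro!: rel.rProg)
        ultimately show ?thesis by blast
      qed
    next
      case p2
      from app_step_inv[of Hole "Tr G y" w' t'] p2 s_reset
      have "(is_val w' \<and> t' = subst x w' (subst k (cont G y) t0)) \<or> (\<exists>u2. sos w' u2 \<and> t' = App (Tr G y) u2)"
        using val_Tr[of G y] by (auto simp: Tr_def)
      hence h: "t' = subst x w' (subst k (cont G y) t0)" using p2 val_nostep by blast
      have "sos p (Reset (subst k (Lam y (Reset (plug (compc G E) (Var y)))) (subst x w t0)))"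
        using sos.s_shift[of "compc G E" y k "subst x w t0"] p2 pE cE by simp
      moreover have "rel (Reset (subst k (Lam y (Reset (plug (compc G E) (Var y)))) (subst x w t0))) q'"
        using bwd_beta_aux[of G w w' y] p2 h s_reset by auto
      ultimately show ?thesis by blast
    qed
  next
    case s_resetv
    from rel_ResetE'[of p q'] less.prems(2) s_resetv
    consider (c) s where "p = Reset s" "rel s q'"
      | (p) G u' y where "q' = App (Tr G y) u'"
      by blast
    then show ?thesis
    proof cases
      case c
      then have "is_val s" using rel_val s_resetv by blast
      then show ?thesis using c s_resetv by (auto intro: sos.s_resetv)
    next
      case p then show ?thesis using s_resetv by (simp add: is_val_def)
    qed
  next
    case (s_shift G' z j s')
    have cG': "fvc G' = {}" using less.prems s_shift by auto
    from rel_ResetE'[of p "plug G' (Shift j s')"] less.prems(2) s_shift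
    consider (c) s where "p = Reset s" "rel s (plug G' (Shift j s'))"
      | (p) G0 u u' y where "pure G0" "fvc G0 = {}" "rel u u'" "p = Reset (plug G0 (App (Lam x B) u))"
          "plug G' (Shift j s') = App (Tr G0 y) u'"
      | (p2) G0 w' y where "is_val w'" "plug G' (Shift j s') = App (Tr G0 y) w'"
      by blast
    then show ?thesis
    proof cases
      case c
      from rel_decomp'[OF s_shift(3) c(2)] obtain G X where
        G: "s = plug G X" "pure G" "ctxr G G'" "rel X (Shift j s')" by blast
      from rel_ShiftE'[OF G(4)] obtain s2 where s2: "X = Shift j s2" "rel s2 s'" by blast
      have cG: "fvc G = {}" using less.prems(3) c G by auto
      have "sos p (Reset (subst j (Lam z (Reset (plug G (Var z)))) s2))"
        using sos.s_shift[OF G(2), of z j s2] cG c G s2 by simp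
      moreover have "rel (Reset (subst j (Lam z (Reset (plug G (Var z)))) s2)) q'"
        using s_shift s2 cG cG' G
        by (auto intro!: rel.rReset rel_subst rel.rLam ctxr_plug rel.rVar simp: closed_def)
      ultimately show ?thesis by blast
    next
      case p
      from app_shift_decomp[of Hole G' "Tr G0 y" u' j s'] p s_shift
      obtain G3' where G3': "pure G3'" "G' = CArg (Tr G0 y) G3'" "u' = plug G3' (Shift j s')"
        by auto
      from rel_decomp'[OF G3'(1)] p(3) G3'(3) obtain G3 X where
        G3: "u = plug G3 X" "pure G3" "ctxr G3 G3'" "rel X (Shift j s')" by blast
      from rel_ShiftE'[OF G3(4)] obtain s2 where s2: "X = Shift j s2" "rel s2 s'" by blast
      have cG3: "fvc G3 = {}" using less.prems(3) p G3 by auto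
      have cG3': "fvc G3' = {}" using cG' G3' by auto
      let ?dL = "Lam z (Reset (plug (compc G0 (CArg (Lam x B) G3)) (Var z)))"
      have "sos p (Reset (subst j ?dL s2))"
        using sos.s_shift[of "compc G0 (CArg (Lam x B) G3)" z j s2] cG3 p G3 s2 closed_LamB
        by (auto simp: closed_def)
      moreover have "rel (Reset (subst j ?dL s2)) q'"
      proof -
        have "rel ?dL (Lam z (Reset (plug G' (Var z))))"
          using G3 p G3' by (auto intro!: rel.rLam rel.rProg ctxr_plug rel.rVar)
        moreover have "closed ?dL" using cG3 closed_LamB p by (auto simp: closed_def)
        moreover have "closed (Lam z (Reset (plug G' (Var z))))" using cG' by (auto simp: closed_def)
        ultimately show ?thesis using s_shift s2 by (auto intro!: rel.rReset rel_subst)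
      qed
      ultimately show ?thesis by blast
    next
      case p2
      from app_shift_decomp[of Hole G' "Tr G0 y" w' j s'] p2 s_shift
      obtain G3' where "pure G3'" "w' = plug G3' (Shift j s')" by auto
      then show ?thesis using p2 pure_plug_nonval by blast
    qed
  qed
qed

end



lemma tilde_rel_gen: "tilde_raw Env a b \<Longrightarrow> (\<And>a b. (a, b) \<in> Env \<Longrightarrow> Q a b) \<Longrightarrow>
   (\<And>y. Q (Var y) (Var y)) \<Longrightarrow> (\<And>s s' y. Q s s' \<Longrightarrow> Q (Lam y s) (Lam y s')) \<Longrightarrow>
   (\<And>s s' t t'. Q s s' \<Longrightarrow> Q t t' \<Longrightarrow> Q (App s t) (App s' t')) \<Longrightarrow>
   (\<And>s s' y. Q s s' \<Longrightarrow> Q (Shift y s) (Shift y s')) \<Longrightarrow>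
   (\<And>s s'. Q s s' \<Longrightarrow> Q (Reset s) (Reset s')) \<Longrightarrow> Q a b"
  by (induction rule: tilde_raw.induct) auto

lemma tilde_empty: "tilde_raw {} a b \<Longrightarrow> a = b"
  by (induction rule: tilde_raw.induct) auto

lemma hat_empty: "hat {} F0 F1 \<Longrightarrow> F0 = F1"
  by (induction rule: hat.induct) (auto simp: tilde_def dest: tilde_empty)

lemma hat_closed: "hat Env F0 F1 \<Longrightarrow> fvc F0 = {} \<and> fvc F1 = {}"
  by (induction rule: hat.induct) (auto simp: tilde_def closed_def)

locale L1 = L +
  fixes t1 :: trm
  assumes ct1: "closed t1"
begin

definition Lt where "Lt = App (Lam x B) t1"
definition Rt where "Rt = plug E (Shift k (App (Lam x t0) t1))"

definition Es :: "env set" where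
  "Es = {Env. env_ok Env \<and> (\<forall>(a, b) \<in> Env. rel a b)}"

definition Ts :: "(env \<times> trm \<times> trm) set" where
  "Ts = {(Env, a, b). Env \<in> Es \<and> rel a b \<and> closed a \<and> closed b}
      \<union> {({}, Reset (plug G Lt), Reset (plug G Rt)) | G. pure G \<and> fvc G = {}}
      \<union> {({}, Lt, Rt)}"

lemma tilde_rel: "Env \<in> Es \<Longrightarrow> tilde_raw Env a b \<Longrightarrow> rel a b"
  by (erule tilde_rel_gen) (auto simp: Es_def intro: rel.intros)

lemma hat_ctxr: "hat Env F0 F1 \<Longrightarrow> Env \<in> Es \<Longrightarrow> ctxr F0 F1"
  by (induction rule: hat.induct) (auto simp: tilde_def tilde_rel)

lemma empty_Es[simp]: "{} \<in> Es"
  by (simp add: Es_def env_ok_def)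

lemma closed_Lt: "closed Lt"
  using closed_LamB ct1 by (simp add: Lt_def)

lemma closed_Rt: "closed Rt"
  using cE ft0 ct1 by (auto simp: Rt_def closed_def)

lemma Rt_step: "pure G \<Longrightarrow> fvc G = {} \<Longrightarrow> sos (Reset (plug G Rt)) (Reset (App (Tr G z) t1))"
proof -
  assume G: "pure G" "fvc G = {}"
  have "sos (Reset (plug (compc G E) (Shift k (App (Lam x t0) t1))))
         (Reset (subst k (Lam z (Reset (plug (compc G E) (Var z)))) (App (Lam x t0) t1)))"
    using sos.s_shift[of "compc G E" z k "App (Lam x t0) t1"] G pE cE by simp
  moreover have "subst k (Lam z (Reset (plug (compc G E) (Var z)))) (App (Lam x t0) t1) = App (Tr G z) t1"
    using xk ct1 by (simp add: Tr_def cont_eq subst_closed)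
  ultimately show ?thesis by (simp add: Rt_def)
qed

lemma Rt_step_inv: "pure G \<Longrightarrow> fvc G = {} \<Longrightarrow> sos (Reset (plug G Rt)) r \<Longrightarrow> \<exists>z. r = Reset (App (Tr G z) t1)"
proof -
  assume G: "pure G" "fvc G = {}" and st: "sos (Reset (plug G Rt)) r"
  have e: "plug G Rt = plug (compc G E) (Shift k (App (Lam x t0) t1))" by (simp add: Rt_def)
  from st show ?thesis
  proof (cases rule: sos.cases)
    case (s_reset t')
    then show ?thesis using nostep_shift[of "compc G E"] G pE e by auto
  next
    case s_resetv
    then show ?thesis using pure_plug_nonval[of "compc G E"] G pE e by auto
  next
    case (s_shift G2 z j s)
    with shift_uniq[of G2 "compc G E" j s k "App (Lam x t0) t1"] G pE e
    have "G2 = compc G E" "j = k" "s = App (Lam x t0) t1" by auto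
    then have "r = Reset (subst k (Lam z (Reset (plug (compc G E) (Var z)))) (App (Lam x t0) t1))"
      using s_shift by simp
    also have "\<dots> = Reset (App (Tr G z) t1)"
      using xk ct1 by (simp add: Tr_def cont_eq subst_closed)
    finally show ?thesis by blast
  qed
qed

lemma special_rel: "pure G \<Longrightarrow> fvc G = {} \<Longrightarrow> rel (Reset (plug G Lt)) (Reset (App (Tr G z) t1))"
  by (simp add: Lt_def rel.rProg rel_refl)

lemma closed_mid: "fvc G = {} \<Longrightarrow> closed (Reset (App (Tr G z) t1))"
  using closed_Tr ct1 by simp

end



context L1 begin

lemma c3: "(Env, a, b) \<in> Ts \<Longrightarrow> \<not> (is_prog a \<and> is_prog b) \<Longrightarrow> pure E0 \<Longrightarrow> pure E1 \<Longrightarrow>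
  hat Env E0 E1 \<Longrightarrow> (Env, Reset (plug E0 a), Reset (plug E1 b)) \<in> Ts"
proof -
  assume T: "(Env, a, b) \<in> Ts" and np: "\<not> (is_prog a \<and> is_prog b)" and pu: "pure E0" "pure E1"
    and h: "hat Env E0 E1"
  have cl: "fvc E0 = {}" "fvc E1 = {}" using hat_closed[OF h] by auto
  from T consider (r) "Env \<in> Es" "rel a b" "closed a" "closed b"
    | (s) G where "Env = {}" "a = Reset (plug G Lt)" "b = Reset (plug G Rt)"
    | (lr) "Env = {}" "a = Lt" "b = Rt"
    unfolding Ts_def by blast
  then show ?thesis
  proof cases
    case r
    have "ctxr E0 E1" using hat_ctxr[OF h r(1)] .
    then have "rel (Reset (plug E0 a)) (Reset (plug E1 b))" using r by (auto intro: rel.rReset ctxr_plug)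
    then show ?thesis using r cl unfolding Ts_def by auto
  next
    case s then show ?thesis using np by (simp add: is_prog_def)
  next
    case lr
    have "E0 = E1" using hat_empty h lr by blast
    then show ?thesis using lr pu cl unfolding Ts_def by auto
  qed
qed

lemma fwd_cl: "sos p q \<Longrightarrow> rel p p' \<Longrightarrow> closed p \<Longrightarrow> closed p' \<Longrightarrow>
  \<exists>q'. sos\<^sup>*\<^sup>* p' q' \<and> rel q q' \<and> closed q \<and> closed q'"
  using fwd sos_closed sos_star_closed by blast

lemma bwd_cl: "sos p' q' \<Longrightarrow> rel p p' \<Longrightarrow> closed p \<Longrightarrow> closed p' \<Longrightarrow>
  \<exists>q. sos\<^sup>*\<^sup>* p q \<and> rel q q' \<and> closed q \<and> closed q'"
  using bwd sos_closed sos_star_closed by blast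

lemma env_ins: "Env \<in> Es \<Longrightarrow> rel v0 v1 \<Longrightarrow> closed v0 \<Longrightarrow> closed v1 \<Longrightarrow> is_val v0 \<Longrightarrow> is_val v1 \<Longrightarrow>
   insert (v0, v1) Env \<in> Es"
  by (auto simp: Es_def env_ok_def)

lemma c4: "(Env, p0, p1) \<in> Ts \<Longrightarrow> is_prog p0 \<Longrightarrow> is_prog p1 \<Longrightarrow>
        (\<forall>p0'. step p0 p0' \<and> is_prog p0' \<longrightarrow>
           (\<exists>p1'. steps p1 p1' \<and> is_prog p1' \<and> (Env, p0', p1') \<in> Ts)) \<and>
        (\<forall>v0. step p0 v0 \<and> is_val v0 \<longrightarrow>
           (\<exists>v1. steps p1 v1 \<and> is_val v1 \<and> insert (v0, v1) Env \<in> Es)) \<and>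
        (\<forall>p1'. step p1 p1' \<and> is_prog p1' \<longrightarrow>
           (\<exists>p0'. steps p0 p0' \<and> is_prog p0' \<and> (Env, p0', p1') \<in> Ts)) \<and>
        (\<forall>v1. step p1 v1 \<and> is_val v1 \<longrightarrow>
           (\<exists>v0. steps p0 v0 \<and> is_val v0 \<and> insert (v0, v1) Env \<in> Es))"
proof -
  assume T: "(Env, p0, p1) \<in> Ts" and pp: "is_prog p0" "is_prog p1"
  from T consider (r) "Env \<in> Es" "rel p0 p1" "closed p0" "closed p1"
    | (s) G where "Env = {}" "p0 = Reset (plug G Lt)" "p1 = Reset (plug G Rt)" "pure G" "fvc G = {}"
    | (lr) "Env = {}" "p0 = Lt" "p1 = Rt"
    unfolding Ts_def by blast
  then show ?thesis
  proof cases
    case r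
    show ?thesis unfolding step_eq
    proof (intro conjI allI impI; elim conjE)
      fix p0' assume "sos p0 p0'" "is_prog p0'"
      then show "\<exists>p1'. sos\<^sup>*\<^sup>* p1 p1' \<and> is_prog p1' \<and> (Env, p0', p1') \<in> Ts"
        using fwd_cl[of p0 p0' p1] r rel_prog unfolding Ts_def by blast
    next
      fix v0 assume "sos p0 v0" "is_val v0"
      then show "\<exists>v1. sos\<^sup>*\<^sup>* p1 v1 \<and> is_val v1 \<and> insert (v0, v1) Env \<in> Es"
        using fwd_cl[of p0 v0 p1] r rel_val env_ins by metis
    next
      fix p1' assume "sos p1 p1'" "is_prog p1'"
      then show "\<exists>p0'. sos\<^sup>*\<^sup>* p0 p0' \<and> is_prog p0' \<and> (Env, p0', p1') \<in> Ts"
        using bwd_cl[of p1 p1' p0] r rel_prog unfolding Ts_def by blast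
    next
      fix v1 assume "sos p1 v1" "is_val v1"
      then show "\<exists>v0. sos\<^sup>*\<^sup>* p0 v0 \<and> is_val v0 \<and> insert (v0, v1) Env \<in> Es"
        using bwd_cl[of p1 v1 p0] r rel_val env_ins by metis
    qed
  next
    case s
    let ?pm = "Reset (App (Tr G 0) t1)"
    have m1: "sos p1 ?pm" using Rt_step s by simp
    have m2: "rel p0 ?pm" using special_rel s by simp
    have cp0: "closed p0" using s closed_Lt by simp
    have cpm: "closed ?pm" using closed_mid s by simp
    show ?thesis unfolding step_eq
    proof (intro conjI allI impI; elim conjE)
      fix p0' assume a: "sos p0 p0'" "is_prog p0'"
      from fwd_cl[OF a(1) m2 cp0 cpm] obtain q' where "sos\<^sup>*\<^sup>* ?pm q'" "rel p0' q'" "closed p0'" "closed q'"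
        by blast
      moreover have "sos\<^sup>*\<^sup>* p1 q'" using m1 calculation(1) by (meson converse_rtranclp_into_rtranclp)
      ultimately show "\<exists>p1'. sos\<^sup>*\<^sup>* p1 p1' \<and> is_prog p1' \<and> (Env, p0', p1') \<in> Ts"
        using a s rel_prog unfolding Ts_def by auto
    next
      fix v0 assume a: "sos p0 v0" "is_val v0"
      from fwd_cl[OF a(1) m2 cp0 cpm] obtain q' where "sos\<^sup>*\<^sup>* ?pm q'" "rel v0 q'" "closed v0" "closed q'"
        by blast
      moreover have "sos\<^sup>*\<^sup>* p1 q'" using m1 calculation(1) by (meson converse_rtranclp_into_rtranclp)
      ultimately show "\<exists>v1. sos\<^sup>*\<^sup>* p1 v1 \<and> is_val v1 \<and> insert (v0, v1) Env \<in> Es"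
        using a s rel_val env_ins[of "{}" v0 q'] by auto
    next
      fix p1' assume a: "sos p1 p1'" "is_prog p1'"
      from Rt_step_inv[of G p1'] a s obtain z where z: "p1' = Reset (App (Tr G z) t1)" by auto
      have "rel p0 p1'" using special_rel s z by simp
      moreover have "closed p1'" using closed_mid s z by simp
      ultimately show "\<exists>p0'. sos\<^sup>*\<^sup>* p0 p0' \<and> is_prog p0' \<and> (Env, p0', p1') \<in> Ts"
        using pp s cp0 unfolding Ts_def by auto
    next
      fix v1 assume a: "sos p1 v1" "is_val v1"
      from Rt_step_inv[of G v1] a s obtain z where z: "v1 = Reset (App (Tr G z) t1)" by auto
      then show "\<exists>v0. sos\<^sup>*\<^sup>* p0 v0 \<and> is_val v0 \<and> insert (v0, v1) Env \<in> Es"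
        using a by (simp add: is_val_def)
    qed
  next
    case lr then show ?thesis using pp by (simp add: is_prog_def Lt_def)
  qed
qed

lemma c5: "Env \<in> Es \<Longrightarrow> (Lam x0 s0, Lam x1 s1) \<in> Env \<Longrightarrow> tilde Env v0 v1 \<Longrightarrow>
   (Env, subst x0 v0 s0, subst x1 v1 s1) \<in> Ts"
proof -
  assume En: "Env \<in> Es" and m: "(Lam x0 s0, Lam x1 s1) \<in> Env" and t: "tilde Env v0 v1"
  have rl: "rel (Lam x0 s0) (Lam x1 s1)" using En m unfolding Es_def by auto
  have cl: "closed (Lam x0 s0)" "closed (Lam x1 s1)" using En m unfolding Es_def env_ok_def by auto
  have rv: "rel v0 v1" "closed v0" "closed v1" using t tilde_rel[OF En] unfolding tilde_def by auto
  have c0: "closed (subst x0 v0 s0)" using cl(1) rv(2) fv_subst[of x0 v0 s0] by (auto simp: closed_def)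
  have c1: "closed (subst x1 v1 s1)" using cl(2) rv(3) fv_subst[of x1 v1 s1] by (auto simp: closed_def)
  have "rel (subst x0 v0 s0) (subst x1 v1 s1)"
    using rel_LamE[OF rl]
  proof
    assume "\<exists>s'. Lam x1 s1 = Lam x0 s' \<and> rel s0 s'"
    then show ?thesis using rel_subst rv by auto
  next
    assume "\<exists>G z. pure G \<and> fvc G = {} \<and> s0 = Reset (plug G (Var x0)) \<and> Lam x1 s1 = Lam z (Reset (plug G (Var z)))"
    then obtain G where G: "pure G" "fvc G = {}" "s0 = Reset (plug G (Var x0))" "s1 = Reset (plug G (Var x1))"
      by auto
    then show ?thesis using rv by (simp add: subst_plug rel.rReset ctxr_plug ctxr_refl)
  qed
  then show ?thesis using En c0 c1 unfolding Ts_def by auto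
qed

lemma bisim: "env_bisim Es Ts"
  unfolding env_bisim_def
  apply (intro conjI)
  subgoal by (simp add: Es_def)
  subgoal using closed_Lt closed_Rt by (auto simp: Ts_def Es_def env_ok_def)
  subgoal using c3 by blast
  subgoal using c4 by blast
  subgoal using c5 by blast
  done

lemma main: "bisim_p {} Lt Rt"
  unfolding bisim_p_def using bisim unfolding Ts_def by blast

end


theorem lemma21:
  fixes t0 t1 :: trm and E :: ctx and x k :: var
  assumes "pure E"
    and "x \<noteq> k"
    and "k \<notin> fv t1"
    and "x \<notin> fvc E"
    and "closed (App (Lam x (plug E (Shift k t0))) t1)"
    and "closed (plug E (Shift k (App (Lam x t0) t1)))"
  shows "bisim_p {} (App (Lam x (plug E (Shift k t0))) t1)
                    (plug E (Shift k (App (Lam x t0) t1)))"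
proof -
  have cE: "fvc E = {}" using assms(4,5) by (auto simp: closed_def)
  have ft0: "fv t0 \<subseteq> {x, k}" using assms(6) by (auto simp: closed_def)
  have ct1: "closed t1" using assms(5) by (auto simp: closed_def)
  interpret L1 x k t0 E t1
    using assms(1,2) cE ft0 ct1 by unfold_locales auto
  show ?thesis using main unfolding Lt_def Rt_def B_def .
qed

end
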